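(* For every $n\geq0$, the dimension of the $n$th graded component of the quotient $\mathbf{ASM}/\mathcal{I}_{\operatorname{io}}$ is $\left\lfloor\frac{(n-1)^2}{4}\right\rfloor+1$.
   Context: An ASM of size $n$ is an $n\times n$ matrix over $\{0,1,-1\}$ whose nonzero entries in every row and column alternate in sign, starting and ending with $+1$; $\operatorname{io}(\delta)$ is the number of entries equal to $-1$ in $\delta$. $\mathbf{ASM}$ is the graded vector space (over $\mathbb{K}$ of characteristic zero) with basis $(\mathbf{F}_{M^\delta})$ indexed by ASMs $\delta$, the degree of $\mathbf{F}_{M^\delta}$ being the size of $\delta$. $\mathcal{I}_{\operatorname{io}}$ is the subspace spanned by all $\mathbf{F}_{M^{\delta_1}}-\mathbf{F}_{M^{\delta_2}}$ with $\delta_1,\delta_2$ ASMs of the same size satisfying $\operatorname{io}(\delta_1)=\operatorname{io}(\delta_2)$; the quotient is graded by size. *)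

theory Defs
  imports Main "HOL.Vector_Spaces" "HOL-Library.Function_Algebras"
begin

text \<open>Matrices of size n are represented as functions nat => nat => int,
  with entries outside the index range 0..<n required to be zero.\<close>

type_synonym mat = "nat \<Rightarrow> nat \<Rightarrow> int"

definition alternating_pm :: "int list \<Rightarrow> bool" where
  "alternating_pm xs \<longleftrightarrow> odd (length xs) \<and>
     (\<forall>k < length xs. xs ! k = (if even k then 1 else -1))"

definition is_ASM :: "nat \<Rightarrow> mat \<Rightarrow> bool" where
  "is_ASM n A \<longleftrightarrow>
     (\<forall>i j. A i j \<in> {0, 1, -1}) \<and>
     (\<forall>i j. (n \<le> i \<or> n \<le> j) \<longrightarrow> A i j = 0) \<and>
     (\<forall>i < n. alternating_pm (filter (\<lambda>x. x \<noteq> 0) (map (\<lambda>j. A i j) [0..<n]))) \<and>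
     (\<forall>j < n. alternating_pm (filter (\<lambda>x. x \<noteq> 0) (map (\<lambda>i. A i j) [0..<n])))"

definition ASMs :: "nat \<Rightarrow> mat set" where
  "ASMs n = {A. is_ASM n A}"

definition io :: "nat \<Rightarrow> mat \<Rightarrow> nat" where
  "io n A = card {(i, j). i < n \<and> j < n \<and> A i j = -1}"

text \<open>The vector space ASM: finitely supported functions from matrices to a field 'k;
  the basis element F_{M^delta} is the indicator of delta.\<close>
definition fscale :: "'k::field \<Rightarrow> (mat \<Rightarrow> 'k) \<Rightarrow> (mat \<Rightarrow> 'k)" where
  "fscale c f = (\<lambda>x. c * f x)"

definition F :: "mat \<Rightarrow> (mat \<Rightarrow> 'k::field)" where
  "F A = (\<lambda>B. if B = A then 1 else 0)"

definition ASM_comp :: "nat \<Rightarrow> (mat \<Rightarrow> 'k::field) set" where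
  "ASM_comp n = module.span fscale (F ` ASMs n)"

text \<open>Degree-n component of the ideal I_io (its generators are homogeneous).\<close>
definition Iio_comp :: "nat \<Rightarrow> (mat \<Rightarrow> 'k::field) set" where
  "Iio_comp n = module.span fscale
     {F A1 - F A2 | A1 A2. A1 \<in> ASMs n \<and> A2 \<in> ASMs n \<and> io n A1 = io n A2}"

text \<open>Dimension of the degree-n component of the quotient ASM / I_io,
  i.e. dim(ASM_n) - dim(I_io intersect ASM_n) (all finite-dimensional).\<close>
definition quot_dim :: "'k::field itself \<Rightarrow> nat \<Rightarrow> nat" where
  "quot_dim _ n = vector_space.dim (fscale :: 'k \<Rightarrow> _) (ASM_comp n)
                  - vector_space.dim (fscale :: 'k \<Rightarrow> _) (Iio_comp n)"

lemma vector_space_fscale: "vector_space (fscale :: 'k::field \<Rightarrow> (mat \<Rightarrow> 'k) \<Rightarrow> _)"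
  by unfold_locales (auto simp: fscale_def fun_eq_iff algebra_simps)

end

theory Submission
  imports Defs
begin


fun altw :: "int \<Rightarrow> int list \<Rightarrow> bool" where
  "altw b [] = (b = 1)"
| "altw b (y#ys) = ((if b = 0 then y = 1 else y = -1) \<and> altw (1-b) ys)"

lemma altw_char:
  "(altw 0 ys \<longleftrightarrow> odd (length ys) \<and> (\<forall>k<length ys. ys!k = (if even k then 1 else -1))) \<and>
   (altw 1 ys \<longleftrightarrow> even (length ys) \<and> (\<forall>k<length ys. ys!k = (if even k then -1 else 1)))"
proof (induction ys)
  case Nil
  then show ?case by simp
next
  case (Cons y ys)
  then show ?case by (auto simp: All_less_Suc2)
qed

lemma altw_alt: "alternating_pm ys = altw 0 ys"
  using altw_char[of ys] by (simp add: alternating_pm_def)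

lemma all_nat_split: "(\<forall>m::nat. P m) = (P 0 \<and> (\<forall>m. P (Suc m)))"
  by (metis not0_implies_Suc)

lemma altw_prefix:
  assumes "set xs \<subseteq> {-1,0,1}" "b \<in> {0,1}"
  shows "altw b (filter (\<lambda>x. x \<noteq> 0) xs) \<longleftrightarrow> (\<forall>m. b + sum_list (take m xs) \<in> {0,1}) \<and> b + sum_list xs = 1"
  using assms
proof (induction xs arbitrary: b)
  case Nil
  then show ?case by auto
next
  case (Cons x xs)
  have x: "x = -1 \<or> x = 0 \<or> x = 1" and xs: "set xs \<subseteq> {-1,0,1}" using Cons.prems by auto
  have eq: "(\<forall>m. b + sum_list (take m (x#xs)) \<in> {0,1}) \<longleftrightarrow> b \<in> {0,1} \<and> (\<forall>m. (b + x) + sum_list (take m xs) \<in> {0,1})"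
    by (subst all_nat_split) (simp add: add.assoc)
  show ?case
  proof -
    from x consider "x = 0" | "x = 1" | "x = -1" by blast
    then show ?thesis
    proof cases
      case 1
      then show ?thesis using Cons.IH[OF xs Cons.prems(2)] Cons.prems(2) eq by simp
    next
      case 2
      then show ?thesis using Cons.IH[OF xs, of "b+1"] Cons.prems(2) eq
        by (auto simp: add.assoc dest: spec[of _ 0])
    next
      case 3
      then show ?thesis using Cons.IH[OF xs, of "b-1"] Cons.prems(2) eq
        by (auto simp: add.assoc dest: spec[of _ 0])
    qed
  qed
qed

lemma alt_prefix:
  assumes "set xs \<subseteq> {-1,0,1}"
  shows "alternating_pm (filter (\<lambda>x. x \<noteq> 0) xs) \<longleftrightarrow> (\<forall>m. sum_list (take m xs) \<in> {0,1}) \<and> sum_list xs = 1"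
  using altw_prefix[OF assms, of 0] by (simp add: altw_alt)

lemma sum_take_map_upt: "sum_list (take m (map f [0..<n])) = (\<Sum>j<min m n. f j)"
proof -
  have "take m [0..<n] = [0..<min m n]" by (simp add: take_upt min_def)
  then show ?thesis by (simp add: take_map interv_sum_list_conv_sum_set_nat lessThan_atLeast0)
qed



lemma sum_map_upt: "sum_list (map f [0..<n]) = (\<Sum>j<n. f j)"
  using sum_take_map_upt[of n f n] by simp

lemma row_cond:
  assumes "\<forall>j. f j \<in> {0,1,-1}"
  shows "alternating_pm (filter (\<lambda>x. x \<noteq> 0) (map f [0..<n])) \<longleftrightarrow>
     (\<forall>m. (\<Sum>j<min m n. f j) \<in> {0,1}) \<and> (\<Sum>j<n. f j) = 1"
proof -
  have "set (map f [0..<n]) \<subseteq> {-1,0,1}" using assms by auto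
  from alt_prefix[OF this] show ?thesis by (simp add: sum_take_map_upt sum_map_upt)
qed

lemma is_ASM_iff:
  "is_ASM n A \<longleftrightarrow> (\<forall>i j. A i j \<in> {0, 1, -1}) \<and>
     (\<forall>i j. (n \<le> i \<or> n \<le> j) \<longrightarrow> A i j = 0) \<and>
     (\<forall>i<n. (\<forall>m. (\<Sum>j<min m n. A i j) \<in> {0,1}) \<and> (\<Sum>j<n. A i j) = 1) \<and>
     (\<forall>j<n. (\<forall>m. (\<Sum>i<min m n. A i j) \<in> {0,1}) \<and> (\<Sum>i<n. A i j) = 1)"
  (is "?lhs = ?rhs")
proof
  assume a: "is_ASM n A"
  then have e: "\<forall>i j. A i j \<in> {0, 1, -1}" by (simp add: is_ASM_def)
  show "?rhs" (is "_ \<and> _ \<and> ?R \<and> ?C")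
  proof (intro conjI)
    show ?R
    proof (intro allI impI)
      fix i assume "i < n"
      then show "(\<forall>m. (\<Sum>j<min m n. A i j) \<in> {0,1}) \<and> (\<Sum>j<n. A i j) = 1"
        using a row_cond[of "\<lambda>j. A i j" n] e by (simp add: is_ASM_def)
    qed
    show ?C
    proof (intro allI impI)
      fix j assume "j < n"
      then show "(\<forall>m. (\<Sum>i<min m n. A i j) \<in> {0,1}) \<and> (\<Sum>i<n. A i j) = 1"
        using a row_cond[of "\<lambda>i. A i j" n] e by (simp add: is_ASM_def)
    qed
    show "\<forall>i j. A i j \<in> {0, 1, -1}" using e .
    show "\<forall>i j. (n \<le> i \<or> n \<le> j) \<longrightarrow> A i j = 0" using a by (simp add: is_ASM_def)
  qed
next
  assume r: ?rhs
  then have e: "\<forall>i j. A i j \<in> {0, 1, -1}" by simp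
  show "is_ASM n A" unfolding is_ASM_def
  proof (intro conjI)
    show "\<forall>i<n. alternating_pm (filter (\<lambda>x. x \<noteq> 0) (map (\<lambda>j. A i j) [0..<n]))"
    proof (intro allI impI)
      fix i assume "i < n"
      then show "alternating_pm (filter (\<lambda>x. x \<noteq> 0) (map (\<lambda>j. A i j) [0..<n]))"
        using r row_cond[of "\<lambda>j. A i j" n] e by simp
    qed
    show "\<forall>j<n. alternating_pm (filter (\<lambda>x. x \<noteq> 0) (map (\<lambda>i. A i j) [0..<n]))"
    proof (intro allI impI)
      fix j assume "j < n"
      then show "alternating_pm (filter (\<lambda>x. x \<noteq> 0) (map (\<lambda>i. A i j) [0..<n]))"
        using r row_cond[of "\<lambda>i. A i j" n] e by simp
    qed
    show "\<forall>i j. A i j \<in> {0, 1, -1}" using e .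
    show "\<forall>i j. (n \<le> i \<or> n \<le> j) \<longrightarrow> A i j = 0" using r by simp
  qed
qed

definition Amat :: "nat \<Rightarrow> (nat \<Rightarrow> nat \<Rightarrow> int) \<Rightarrow> mat" where
  "Amat n c i j = (if i < n \<and> j < n then c (Suc i) (Suc j) - c i (Suc j) - c (Suc i) j + c i j else 0)"

lemma cs_ASM:
  assumes b1: "\<forall>i\<le>n. c i 0 = 0" and b2: "\<forall>j\<le>n. c 0 j = 0"
    and b3: "\<forall>i\<le>n. c i n = int i" and b4: "\<forall>j\<le>n. c n j = int j"
    and sj: "\<forall>i\<le>n. \<forall>j<n. c i (Suc j) - c i j \<in> {0,1}"
    and si: "\<forall>i<n. \<forall>j\<le>n. c (Suc i) j - c i j \<in> {0,1}"
  shows "is_ASM n (Amat n c)"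
  unfolding is_ASM_iff
proof (intro conjI)
  show "\<forall>i j. Amat n c i j \<in> {0, 1, -1}"
  proof (intro allI)
    fix i j
    show "Amat n c i j \<in> {0, 1, -1}"
    proof (cases "i < n \<and> j < n")
      case True
      then have "c (Suc i) (Suc j) - c i (Suc j) \<in> {0,1}" "c (Suc i) j - c i j \<in> {0,1}"
        using si by auto
      then show ?thesis using True by (auto simp: Amat_def)
    qed (auto simp: Amat_def)
  qed
  show "\<forall>i j. (n \<le> i \<or> n \<le> j) \<longrightarrow> Amat n c i j = 0" by (auto simp: Amat_def)
  show "\<forall>i<n. (\<forall>m. (\<Sum>j<min m n. Amat n c i j) \<in> {0,1}) \<and> (\<Sum>j<n. Amat n c i j) = 1"
  proof (intro allI impI)
    fix i assume i: "i < n"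
    have tel: "(\<Sum>j<m. Amat n c i j) = c (Suc i) m - c i m" if "m \<le> n" for m
    proof -
      have "(\<Sum>j<m. Amat n c i j) = (\<Sum>j<m. (c (Suc i) (Suc j) - c i (Suc j)) - (c (Suc i) j - c i j))"
        using i that by (intro sum.cong) (auto simp: Amat_def)
      also have "\<dots> = c (Suc i) m - c i m - (c (Suc i) 0 - c i 0)"
        by (rule sum_lessThan_telescope)
      finally show ?thesis using b1 i by simp
    qed
    show "(\<forall>m. (\<Sum>j<min m n. Amat n c i j) \<in> {0,1}) \<and> (\<Sum>j<n. Amat n c i j) = 1"
    proof
      show "\<forall>m. (\<Sum>j<min m n. Amat n c i j) \<in> {0,1}"
        using tel si i by simp
      show "(\<Sum>j<n. Amat n c i j) = 1" using tel[of n] b3 i by simp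
    qed
  qed
  show "\<forall>j<n. (\<forall>m. (\<Sum>i<min m n. Amat n c i j) \<in> {0,1}) \<and> (\<Sum>i<n. Amat n c i j) = 1"
  proof (intro allI impI)
    fix j assume j: "j < n"
    have tel: "(\<Sum>i<m. Amat n c i j) = c m (Suc j) - c m j" if "m \<le> n" for m
    proof -
      have "(\<Sum>i<m. Amat n c i j) = (\<Sum>i<m. (c (Suc i) (Suc j) - c (Suc i) j) - (c i (Suc j) - c i j))"
        using j that by (intro sum.cong) (auto simp: Amat_def)
      also have "\<dots> = c m (Suc j) - c m j - (c 0 (Suc j) - c 0 j)"
        by (rule sum_lessThan_telescope)
      finally show ?thesis using b2 j by simp
    qed
    show "(\<forall>m. (\<Sum>i<min m n. Amat n c i j) \<in> {0,1}) \<and> (\<Sum>i<n. Amat n c i j) = 1"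
    proof
      show "\<forall>m. (\<Sum>i<min m n. Amat n c i j) \<in> {0,1}"
        using tel sj j by simp
      show "(\<Sum>i<n. Amat n c i j) = 1" using tel[of n] b4 j by simp
    qed
  qed
qed



lemma card_as_sum:
  assumes "finite S" "\<forall>x\<in>S. g x \<in> {0,1::int}"
  shows "int (card {x\<in>S. g x = 1}) = (\<Sum>x\<in>S. g x)"
proof -
  have "(\<Sum>x\<in>S. g x) = (\<Sum>x\<in>S. if g x = 1 then 1 else 0)"
    using assms(2) by (intro sum.cong) auto
  also have "\<dots> = (\<Sum>x\<in>{x\<in>S. g x = 1}. 1)" using assms(1) by (subst sum.inter_filter) simp_all
  finally show ?thesis by simp
qed

lemma row_bound:
  assumes A: "is_ASM n A" and i: "i < n"
  shows "card {j. j < n \<and> A i j = -1} \<le> min i (n - 1 - i)"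
proof -
  note h = A[unfolded is_ASM_iff]
  define P where "P k j = (\<Sum>r<k. A r j)" for k j
  have P01: "P k j \<in> {0,1}" if "k \<le> n" "j < n" for k j
    using h that unfolding P_def by (metis min.absorb1)
  have Psum: "(\<Sum>j<n. P k j) = int k" if "k \<le> n" for k
  proof -
    have "(\<Sum>j<n. P k j) = (\<Sum>r<k. \<Sum>j<n. A r j)" unfolding P_def by (rule sum.swap)
    also have "\<dots> = (\<Sum>r<k. 1)" using h that by (intro sum.cong) auto
    finally show ?thesis by simp
  qed
  have ent: "A i j \<in> {0,1,-1}" for j using h by blast
  have step: "P (Suc i) j = P i j + A i j" for j unfolding P_def by simp
  have s1: "{j. j < n \<and> A i j = -1} \<subseteq> {j\<in>{..<n}. P i j = 1}"
  proof
    fix j assume "j \<in> {j. j < n \<and> A i j = -1}"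
    then have "j < n" "A i j = -1" by auto
    moreover have "P (Suc i) j \<in> {0,1}" "P i j \<in> {0,1}" using P01 i \<open>j<n\<close> by auto
    ultimately show "j \<in> {j\<in>{..<n}. P i j = 1}" using step[of j] by auto
  qed
  have c1: "int (card {j\<in>{..<n}. P i j = 1}) = int i"
    using card_as_sum[of "{..<n}" "P i"] P01 Psum i by simp
  have s2: "{j. j < n \<and> A i j = -1} \<subseteq> {j\<in>{..<n}. 1 - P (Suc i) j = 1}"
  proof
    fix j assume "j \<in> {j. j < n \<and> A i j = -1}"
    then have "j < n" "A i j = -1" by auto
    moreover have "P (Suc i) j \<in> {0,1}" "P i j \<in> {0,1}" using P01 i \<open>j<n\<close> by auto
    ultimately show "j \<in> {j\<in>{..<n}. 1 - P (Suc i) j = 1}" using step[of j] by auto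
  qed
  have "(\<Sum>j<n. 1 - P (Suc i) j) = int n - int (Suc i)"
    using Psum[of "Suc i"] i by (simp add: sum_subtractf)
  moreover have "\<forall>x\<in>{..<n}. 1 - P (Suc i) x \<in> {0,1}"
  proof
    fix x assume "x \<in> {..<n}"
    then have "P (Suc i) x \<in> {0,1}" using P01 i by simp
    then show "1 - P (Suc i) x \<in> {0,1}" by auto
  qed
  ultimately have c2: "int (card {j\<in>{..<n}. 1 - P (Suc i) j = 1}) = int n - int (Suc i)"
    using card_as_sum[of "{..<n}" "\<lambda>j. 1 - P (Suc i) j"] by simp
  have "card {j. j < n \<and> A i j = -1} \<le> i"
    using card_mono[OF _ s1] c1 by simp
  moreover have "card {j. j < n \<and> A i j = -1} \<le> n - 1 - i"
    using card_mono[OF _ s2] c2 i by simp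
  ultimately show ?thesis by simp
qed

lemma io_sum: "io n A = (\<Sum>i<n. card {j. j < n \<and> A i j = -1})"
proof -
  have "{(i, j). i < n \<and> j < n \<and> A i j = -1} = Sigma {..<n} (\<lambda>i. {j. j < n \<and> A i j = -1})"
    by auto
  then show ?thesis unfolding io_def by (simp add: card_SigmaI)
qed

lemma sum_Suc_helper: "(\<Sum>i<m. Suc (f i)) = (\<Sum>i<m. f i) + (m::nat)"
  by (induct m) simp_all

lemma Ssum: "int (\<Sum>i<n. min i (n - 1 - i)) = ((int n - 1)^2) div 4"
proof (induction n rule: nat_less_induct)
  case (1 n)
  show ?case
  proof (cases n)
    case 0 then show ?thesis by simp
  next
    case (Suc n1)
    show ?thesis
    proof (cases n1)
      case 0 then show ?thesis using Suc by simp
    next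
      case (Suc m)
      have IH: "int (\<Sum>i<m. min i (m - 1 - i)) = ((int m - 1)^2) div 4"
        using 1 \<open>n = Suc n1\<close> Suc by simp
      have "(\<Sum>i<Suc (Suc m). min i (Suc m - i)) = (\<Sum>i<Suc m. min i (Suc m - i))"
        by simp
      also have "\<dots> = (\<Sum>i<m. min (Suc i) (m - i))"
        by (subst sum.lessThan_Suc_shift) simp
      also have "\<dots> = (\<Sum>i<m. Suc (min i (m - 1 - i)))"
        by (intro sum.cong) auto
      also have "\<dots> = (\<Sum>i<m. min i (m - 1 - i)) + m"
        by (simp add: sum_Suc_helper)
      finally have e: "(\<Sum>i<Suc (Suc m). min i (Suc m - i)) = (\<Sum>i<m. min i (m - 1 - i)) + m" .
      have e2: "(\<Sum>i<n. min i (n - 1 - i)) = (\<Sum>i<m. min i (m - 1 - i)) + m"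
        using e by (simp only: \<open>n = Suc n1\<close> Suc diff_Suc_1)
      have "((int n - 1)^2) div 4 = ((int m - 1)^2 + 4 * int m) div 4"
        using \<open>n = Suc n1\<close> Suc by (simp add: power2_eq_square algebra_simps)
      also have "\<dots> = ((int m - 1)^2) div 4 + int m" by simp
      finally show ?thesis using e2 IH by simp
    qed
  qed
qed

lemma io_bound:
  assumes "is_ASM n A"
  shows "int (io n A) \<le> ((int n - 1)^2) div 4"
proof -
  have "io n A \<le> (\<Sum>i<n. min i (n - 1 - i))"
    unfolding io_sum using row_bound[OF assms] by (intro sum_mono) auto
  then show ?thesis using Ssum[of n] by linarith
qed



definition cf :: "int \<Rightarrow> int \<Rightarrow> int \<Rightarrow> int \<Rightarrow> int \<Rightarrow> int \<Rightarrow> int" where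
"cf n a p b i j = max (max 0 (i+j-n)) (min (min i j) (min ((i+j-a) div 2) (max (j+p) (min (i+j-b) (j+p+1)))))"

lemma div2_step: "(x + 1) div 2 - x div (2::int) \<in> {0,1}"
  by (cases "even x") (auto elim!: evenE oddE)

lemma max01: "a1 - a0 \<in> {0,1::int} \<Longrightarrow> b1 - b0 \<in> {0,1} \<Longrightarrow> max a1 b1 - max a0 b0 \<in> {0,1}"
  by (auto simp: max_def)
lemma min01: "a1 - a0 \<in> {0,1::int} \<Longrightarrow> b1 - b0 \<in> {0,1} \<Longrightarrow> min a1 b1 - min a0 b0 \<in> {0,1}"
  by (auto simp: min_def)

lemma cf_stepj: "cf n a p b i (j+1) - cf n a p b i j \<in> {0,1}"
proof -
  have eq: "i + (j+1) - a = (i+j-a) + 1" by simp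
  have d: "(i + (j+1) - a) div 2 - (i+j-a) div 2 \<in> {0,1}" unfolding eq by (rule div2_step)
  show ?thesis unfolding cf_def by (intro max01 min01) (use d in auto)
qed

lemma cf_stepi: "cf n a p b (i+1) j - cf n a p b i j \<in> {0,1}"
proof -
  have eq: "i + 1 + j - a = (i+j-a) + 1" by simp
  have d: "(i + 1 + j - a) div 2 - (i+j-a) div 2 \<in> {0,1}" unfolding eq by (rule div2_step)
  show ?thesis unfolding cf_def by (intro max01 min01) (use d in auto)
qed

lemma cf_j0: "0 \<le> i \<Longrightarrow> i \<le> n \<Longrightarrow> cf n a p b i 0 = 0"
  unfolding cf_def by simp
lemma cf_i0: "0 \<le> j \<Longrightarrow> j \<le> n \<Longrightarrow> cf n a p b 0 j = 0"
  unfolding cf_def by simp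
lemma cf_jn: "0 \<le> i \<Longrightarrow> i \<le> n \<Longrightarrow> cf n a p b i n = i"
  unfolding cf_def by simp
lemma cf_in: "0 \<le> j \<Longrightarrow> j \<le> n \<Longrightarrow> cf n a p b n j = j"
  unfolding cf_def by simp

lemma negchar:
  fixes n a q r i j m e f :: int
  assumes "n - 1 = 2*a + f" "f = 0 \<or> f = 1" "i+j-a = 2*m+e" "e = 0 \<or> e = 1" "0 \<le> q" "q \<le> a" "0 \<le> r" "r \<le> n-1-a" "0 \<le> i" "i < n" "0\<le>j" "j<n"
  shows "cf n a (q-a) (n-r) (i+1) (j+1) - cf n a (q-a) (n-r) i (j+1) - cf n a (q-a) (n-r) (i+1) j + cf n a (q-a) (n-r) i j = -1
    \<longleftrightarrow> (e = 1 \<and> 0 \<le> m-j+a \<and> m-j+a < a \<and> 0 \<le> m \<and> m < n-1-a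
      \<and> (m-j+a < q \<or> (m-j+a = q \<and> n-1-a-r \<le> m)))"
proof -
  have d1: "(i+1+(j+1)-a) div 2 = m+1"
  proof -
    have "i+1+(j+1)-a = 2*(m+1) + e" using assms(3) by simp
    then show ?thesis using assms(4) by auto
  qed
  have d2: "(i+(j+1)-a) div 2 = m+e"
  proof -
    have "i+(j+1)-a = 2*m + (e+1)" using assms(3) by simp
    then show ?thesis using assms(4) by auto
  qed
  have d3: "(i+1+j-a) div 2 = m+e"
  proof -
    have "i+1+j-a = 2*m + (e+1)" using assms(3) by simp
    then show ?thesis using assms(4) by auto
  qed
  have d4: "(i+j-a) div 2 = m"
    using assms(3,4) by auto
  show ?thesis
    unfolding cf_def d1 d2 d3 d4 using assms by smt
qed



lemma construct:
  fixes n k :: nat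
  assumes n1: "1 \<le> n" and kb: "k \<le> ((n-1) div 2) * (n - 1 - (n-1) div 2)"
  shows "\<exists>A. is_ASM n A \<and> io n A = k"
proof -
  define a where "a = (n-1) div 2"
  define B where "B = n - 1 - a"
  define q where "q = k div B"
  define r where "r = k mod B"
  have kb': "k \<le> a * B" using kb by (simp add: a_def B_def)
  have qa: "q \<le> a" and qr: "q = a \<longrightarrow> r = 0" and rB: "r \<le> B" and kqr: "k = q * B + r"
  proof -
    show "k = q * B + r" by (simp add: q_def r_def)
    show "q \<le> a"
    proof (cases "B = 0")
      case True then show ?thesis by (simp add: q_def)
    next
      case False
      then show ?thesis using kb' unfolding q_def
        by (metis div_le_mono nonzero_mult_div_cancel_right)
    qed
    show "r \<le> B"
    proof (cases "B = 0")
      case True then show ?thesis using kb' by (simp add: r_def)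
    next
      case False then show ?thesis by (simp add: r_def less_imp_le)
    qed
    show "q = a \<longrightarrow> r = 0"
    proof
      assume "q = a"
      then have "a * B + r \<le> a * B" using kb' \<open>k = q * B + r\<close> by (simp add: mult.commute)
      then show "r = 0" by simp
    qed
  qed
  define f :: int where "f = int ((n-1) mod 2)"
  have nf: "int n - 1 = 2 * int a + f" "f = 0 \<or> f = 1"
  proof -
    have "n - 1 = 2 * a + (n-1) mod 2" by (simp add: a_def)
    then show "int n - 1 = 2 * int a + f" using n1 unfolding f_def by linarith
    show "f = 0 \<or> f = 1" unfolding f_def by auto
  qed
  have aB: "a + B = n - 1" "a \<le> n - 1" unfolding B_def a_def by auto
  define c where "c i j = cf (int n) (int a) (int q - int a) (int n - int r) (int i) (int j)" for i j
  define A where "A = Amat n c"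
  have ASM: "is_ASM n A" unfolding A_def
  proof (rule cs_ASM)
    show "\<forall>i\<le>n. c i 0 = 0" by (simp add: c_def cf_j0)
    show "\<forall>j\<le>n. c 0 j = 0" by (simp add: c_def cf_i0)
    show "\<forall>i\<le>n. c i n = int i" by (simp add: c_def cf_jn)
    show "\<forall>j\<le>n. c n j = int j" by (simp add: c_def cf_in)
    show "\<forall>i\<le>n. \<forall>j<n. c i (Suc j) - c i j \<in> {0, 1}"
    proof (intro allI impI)
      fix i j
      have "c i (Suc j) = cf (int n) (int a) (int q - int a) (int n - int r) (int i) (int j + 1)"
        by (simp add: c_def add.commute)
      then show "c i (Suc j) - c i j \<in> {0, 1}" using cf_stepj unfolding c_def by presburger
    qed
    show "\<forall>i<n. \<forall>j\<le>n. c (Suc i) j - c i j \<in> {0, 1}"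
    proof (intro allI impI)
      fix i j
      have "c (Suc i) j = cf (int n) (int a) (int q - int a) (int n - int r) (int i + 1) (int j)"
        by (simp add: c_def add.commute)
      then show "c (Suc i) j - c i j \<in> {0, 1}" using cf_stepi unfolding c_def by presburger
    qed
  qed
  define Lex where "Lex = {(s,t). s < a \<and> t < B \<and> (s < q \<or> (s = q \<and> B - r \<le> t))}"
  define \<phi> where "\<phi> = (\<lambda>(s::nat,t::nat). (1+s+t, a+t-s))"
  have Aval: "A i j = cf (int n) (int a) (int q - int a) (int n - int r) (int i + 1) (int j + 1)
      - cf (int n) (int a) (int q - int a) (int n - int r) (int i) (int j + 1)
      - cf (int n) (int a) (int q - int a) (int n - int r) (int i + 1) (int j)
      + cf (int n) (int a) (int q - int a) (int n - int r) (int i) (int j)" if "i < n" "j < n" for i j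
    using that by (simp add: A_def Amat_def c_def add.commute)
  have neg: "A i j = -1 \<longleftrightarrow>
      ((int i + int j - int a) mod 2 = 1 \<and> 0 \<le> (int i + int j - int a) div 2 - int j + int a
       \<and> (int i + int j - int a) div 2 - int j + int a < int a
       \<and> 0 \<le> (int i + int j - int a) div 2 \<and> (int i + int j - int a) div 2 < int n - 1 - int a
       \<and> ((int i + int j - int a) div 2 - int j + int a < int q \<or>
          ((int i + int j - int a) div 2 - int j + int a = int q \<and> int n - 1 - int a - int r \<le> (int i + int j - int a) div 2)))"
    if "i < n" "j < n" for i j
    unfolding Aval[OF that]
  proof (rule negchar[OF nf])
    show "int i + int j - int a = 2 * ((int i + int j - int a) div 2) + (int i + int j - int a) mod 2" by simp
    show "(int i + int j - int a) mod 2 = 0 \<or> (int i + int j - int a) mod 2 = 1" by auto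
    show "0 \<le> int q" "int q \<le> int a" "0 \<le> int r" "int r \<le> int n - 1 - int a"
      "0 \<le> int i" "int i < int n" "0 \<le> int j" "int j < int n"
      using qa rB aB that by auto
  qed
  have Seq: "{(i, j). i < n \<and> j < n \<and> A i j = -1} = \<phi> ` Lex"
  proof (intro equalityI subsetI)
    fix x assume "x \<in> {(i, j). i < n \<and> j < n \<and> A i j = -1}"
    then obtain i j where x: "x = (i,j)" "i < n" "j < n" "A i j = -1" by auto
    define m where "m = (int i + int j - int a) div 2"
    note N = neg[OF x(2,3)]
    have md: "(int i + int j - int a) mod 2 = 1" using N x(4) by simp
    have mm: "int i + int j - int a = 2 * m + 1"
      using div_mult_mod_eq[of "int i + int j - int a" 2] md unfolding m_def by linarith
    have cond: "0 \<le> m - int j + int a" "m - int j + int a < int a"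
      "0 \<le> m" "m < int n - 1 - int a"
      "m - int j + int a < int q \<or> (m - int j + int a = int q \<and> int n - 1 - int a - int r \<le> m)"
      using N x(4) unfolding m_def by auto
    define s where "s = nat (m - int j + int a)"
    define t where "t = nat m"
    have st: "(s,t) \<in> Lex" using cond aB unfolding Lex_def s_def t_def by auto
    have "\<phi> (s,t) = (i,j)" unfolding \<phi>_def s_def t_def using mm cond by auto
    then show "x \<in> \<phi> ` Lex" using st x(1) by force
  next
    fix x assume "x \<in> \<phi> ` Lex"
    then obtain s t where st: "(s,t) \<in> Lex" "x = (1+s+t, a+t-s)" unfolding \<phi>_def by auto
    have sa: "s < a" "t < B" "s < q \<or> (s = q \<and> B - r \<le> t)" using st(1) unfolding Lex_def by auto
    define i where "i = 1+s+t"
    define j where "j = a+t-s"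
    have ij: "i < n" "j < n" using sa aB unfolding i_def j_def by auto
    have e: "int i + int j - int a = 2 * int t + 1" using sa unfolding i_def j_def by simp
    have "(int i + int j - int a) div 2 = int t" "(int i + int j - int a) mod 2 = 1"
      unfolding e by simp_all
    then have "A i j = -1" unfolding neg[OF ij] using sa aB rB unfolding i_def j_def by auto
    then show "x \<in> {(i, j). i < n \<and> j < n \<and> A i j = -1}" using ij st(2) i_def j_def by auto
  qed
  have inj: "inj_on \<phi> Lex"
    unfolding inj_on_def \<phi>_def Lex_def by auto
  have Lex_eq: "Lex = ({..<q} \<times> {..<B}) \<union> ({q} \<times> {B-r..<B})"
    using qa qr rB unfolding Lex_def by auto
  have "card Lex = q * B + r"
    unfolding Lex_eq using rB by (subst card_Un_disjoint) (auto simp: card_cartesian_product)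
  then have "io n A = k" unfolding io_def Seq using card_image[OF inj] kqr by simp
  then show ?thesis using ASM by blast
qed



interpretation V: vector_space "fscale :: 'a::field \<Rightarrow> (mat \<Rightarrow> 'a) \<Rightarrow> mat \<Rightarrow> 'a"
  by (rule vector_space_fscale)

lemma sum_fun_apply: "(sum g T) x = (\<Sum>w\<in>T. g w x)"
proof (cases "finite T")
  case True then show ?thesis by (induct T rule: finite_induct) simp_all
next
  case False then show ?thesis by simp
qed

lemma indep_witness:
  fixes G :: "(mat \<Rightarrow> 'a::field) set"
  assumes w1: "\<forall>g\<in>G. g (\<pi> g) \<noteq> 0" and w2: "\<forall>g\<in>G. \<forall>g'\<in>G. g' \<noteq> g \<longrightarrow> g' (\<pi> g) = 0"
  shows "V.independent G"
proof
  assume "V.dependent G"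
  then obtain T u v where T: "finite T" "T \<subseteq> G" "(\<Sum>w\<in>T. fscale (u w) w) = 0" "v \<in> T" "u v \<noteq> 0"
    unfolding V.dependent_explicit by blast
  have "0 = (\<Sum>w\<in>T. fscale (u w) w) (\<pi> v)" using T(3) by simp
  also have "\<dots> = (\<Sum>w\<in>T. u w * w (\<pi> v))" by (simp add: sum_fun_apply fscale_def)
  also have "\<dots> = u v * v (\<pi> v) + (\<Sum>w\<in>T - {v}. u w * w (\<pi> v))"
    using T(1,4) by (rule sum.remove)
  also have "(\<Sum>w\<in>T - {v}. u w * w (\<pi> v)) = 0"
  proof (rule sum.neutral, intro ballI)
    fix w assume "w \<in> T - {v}"
    then show "u w * w (\<pi> v) = 0" using w2 T(2,4) by auto
  qed
  finally show False using T w1 by auto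
qed

lemma F_inj: "(F A :: mat \<Rightarrow> 'a::field) = F B \<longleftrightarrow> A = B"
proof
  assume "(F A :: mat \<Rightarrow> 'a::field) = F B"
  then have "(F A :: mat \<Rightarrow> 'a) A = F B A" by simp
  then show "A = B" by (simp add: F_def split: if_splits)
qed simp

lemma finite_ASMs: "finite (ASMs n)"
proof -
  let ?S = "{g::nat\<times>nat\<Rightarrow>int. \<forall>x. (x \<in> {..<n}\<times>{..<n} \<longrightarrow> g x \<in> {0,1,-1}) \<and> (x \<notin> {..<n}\<times>{..<n} \<longrightarrow> g x = 0)}"
  have fin: "finite ?S" by (rule finite_set_of_finite_funs) auto
  have "(\<lambda>A. case_prod A) ` ASMs n \<subseteq> ?S"
  proof
    fix g assume "g \<in> (\<lambda>A. case_prod A) ` ASMs n"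
    then obtain A where A: "A \<in> ASMs n" "g = case_prod A" by blast
    then have "\<forall>i j. A i j \<in> {0, 1, -1}" "\<forall>i j. (n \<le> i \<or> n \<le> j) \<longrightarrow> A i j = 0"
      unfolding ASMs_def is_ASM_def by simp_all
    then show "g \<in> ?S" using A(2) by force
  qed
  then have "finite ((\<lambda>A. case_prod A) ` ASMs n)" using fin finite_subset by blast
  moreover have "inj_on (\<lambda>A. case_prod A) (ASMs n)"
    by (rule inj_onI) (metis curry_case_prod)
  ultimately show ?thesis using finite_imageD by blast
qed

lemma F_apply: "F A B = (if B = A then 1 else 0)" by (simp add: F_def)

lemma dim_ASM_comp: "V.dim (ASM_comp n :: (mat \<Rightarrow> 'a::field) set) = card (ASMs n)"
proof -
  have ind: "V.independent (F ` ASMs n :: (mat \<Rightarrow> 'a) set)"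
    by (rule indep_witness[where \<pi> = "\<lambda>g. SOME A. g = F A"]) (auto simp: F_apply F_inj)
  have "inj_on (F :: mat \<Rightarrow> mat \<Rightarrow> 'a) (ASMs n)"
    by (rule inj_onI) (simp add: F_inj)
  then show ?thesis unfolding ASM_comp_def V.dim_span_eq_card_independent[OF ind]
    by (simp add: card_image)
qed

lemma dim_Iio_comp: "V.dim (Iio_comp n :: (mat \<Rightarrow> 'a::field) set) = card (ASMs n) - card (io n ` ASMs n)"
proof -
  let ?S = "ASMs n"
  define rep where "rep v = (SOME A. A \<in> ?S \<and> io n A = v)" for v
  have rep: "rep v \<in> ?S \<and> io n (rep v) = v" if "v \<in> io n ` ?S" for v
    using that unfolding rep_def by (metis (mono_tags, lifting) imageE someI_ex)
  define R where "R = rep ` (io n ` ?S)"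
  have RS: "R \<subseteq> ?S" using rep unfolding R_def by auto
  have repR: "rep (io n A) = A" if "A \<in> R" for A
    using that rep unfolding R_def by auto
  have repin: "rep (io n A) \<in> R" if "A \<in> ?S" for A using that unfolding R_def by auto
  define g :: "mat \<Rightarrow> mat \<Rightarrow> 'a" where "g A = F A - F (rep (io n A))" for A
  define Bs where "Bs = g ` (?S - R)"
  define G :: "(mat \<Rightarrow> 'a) set" where "G = {F A1 - F A2 | A1 A2. A1 \<in> ?S \<and> A2 \<in> ?S \<and> io n A1 = io n A2}"
  have gval: "g A X = (if X = A then 1 else 0) - (if X = rep (io n A) then 1 else 0)" for A X
    by (simp add: g_def F_apply)
  have g_at: "g A A = 1" if "A \<in> ?S - R" for A
    using that repin[of A] by (auto simp: gval)
  have g_at0: "g A' A = 0" if "A \<in> ?S - R" "A' \<in> ?S - R" "A' \<noteq> A" for A A'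
    using that repin[of A'] by (auto simp: gval)
  have span_eq: "V.span G = V.span Bs"
    unfolding V.span_eq
  proof
    show "G \<subseteq> V.span Bs"
    proof
      fix x assume "x \<in> G"
      then obtain A1 A2 where x: "x = F A1 - F A2" "A1 \<in> ?S" "A2 \<in> ?S" "io n A1 = io n A2"
        unfolding G_def by blast
      have gin: "g A \<in> V.span Bs" if "A \<in> ?S" for A
      proof (cases "A \<in> R")
        case True
        then have "g A = 0" by (simp add: g_def repR)
        then show ?thesis by (simp add: V.span_zero)
      next
        case False
        then show ?thesis using that by (intro V.span_base) (auto simp: Bs_def)
      qed
      have "x = g A1 - g A2" using x by (simp add: g_def)
      then show "x \<in> V.span Bs" using gin x by (simp add: V.span_diff)
    qed
    show "Bs \<subseteq> V.span G"
    proof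
      fix x assume "x \<in> Bs"
      then obtain A where A: "A \<in> ?S - R" "x = g A" unfolding Bs_def by blast
      have "rep (io n A) \<in> ?S" "io n (rep (io n A)) = io n A" using rep A by auto
      then have "\<exists>A1 A2. x = F A1 - F A2 \<and> A1 \<in> ?S \<and> A2 \<in> ?S \<and> io n A1 = io n A2"
        using A unfolding g_def by (intro exI[of _ A] exI[of _ "rep (io n A)"]) auto
      then have "x \<in> G" unfolding G_def by simp
      then show "x \<in> V.span G" by (rule V.span_base)
    qed
  qed
  have ind: "V.independent Bs" unfolding Bs_def
  proof (rule indep_witness[where \<pi> = "\<lambda>h. SOME A. A \<in> ?S - R \<and> h = g A"])
    have sel: "(SOME A. A \<in> ?S - R \<and> g B = g A) = B" if "B \<in> ?S - R" for B
    proof (rule some_equality)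
      fix A assume "A \<in> ?S - R \<and> g B = g A"
      then have "g A A = g B A" "A \<in> ?S - R" by auto
      then show "A = B" using g_at g_at0 that by (metis one_neq_zero)
    qed (use that in auto)
    show "\<forall>h\<in>g ` (?S - R). h (SOME A. A \<in> ?S - R \<and> h = g A) \<noteq> 0"
      using sel g_at by auto
    show "\<forall>h\<in>g ` (?S - R). \<forall>h'\<in>g ` (?S - R). h' \<noteq> h \<longrightarrow> h' (SOME A. A \<in> ?S - R \<and> h = g A) = 0"
      using sel g_at0 by auto
  qed
  have injg: "inj_on g (?S - R)"
    by (rule inj_onI) (metis g_at g_at0 one_neq_zero)
  have injrep: "inj_on rep (io n ` ?S)"
    by (rule inj_onI) (metis rep)
  have fin: "finite ?S" by (rule finite_ASMs)
  have "card Bs = card ?S - card R"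
    unfolding Bs_def using card_image[OF injg] fin RS by (simp add: card_Diff_subset finite_subset)
  moreover have "card R = card (io n ` ?S)" unfolding R_def using card_image[OF injrep] .
  ultimately show ?thesis unfolding Iio_comp_def G_def[symmetric] span_eq
    V.dim_span_eq_card_independent[OF ind] by simp
qed

lemma quot_dim_card: "quot_dim TYPE('a::field) n = card (io n ` ASMs n)"
proof -
  have "card (io n ` ASMs n) \<le> card (ASMs n)" by (rule card_image_le[OF finite_ASMs])
  then show ?thesis unfolding quot_dim_def
    using dim_ASM_comp[where 'a='a] dim_Iio_comp[where 'a='a] by simp
qed



lemma aB_eq:
  assumes "1 \<le> n"
  shows "((n-1) div 2) * (n - 1 - (n-1) div 2) = nat (((int n - 1)^2) div 4)"
proof -
  define a where "a = (n-1) div 2"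
  define f where "f = (n-1) mod 2"
  have nf: "n - 1 = 2*a + f" "f \<le> 1" by (auto simp: a_def f_def)
  have "int n - 1 = 2 * int a + int f" using nf assms by linarith
  then have "(int n - 1)^2 = 4 * (int a * (int a + int f)) + int f * int f"
    by (simp add: power2_eq_square algebra_simps)
  moreover have "int f * int f div 4 = 0" using nf(2) by (cases f) auto
  ultimately have "((int n - 1)^2) div 4 = int a * (int a + int f)" by simp
  moreover have "n - 1 - a = a + f" using nf by simp
  ultimately show ?thesis unfolding a_def[symmetric] by (simp add: nat_mult_distrib nat_add_distrib)
qed

lemma io_image: "io n ` ASMs n = {0..nat (((int n - 1)^2) div 4)}"
proof (intro equalityI subsetI)
  fix x assume "x \<in> io n ` ASMs n"
  then obtain A where "is_ASM n A" "x = io n A" by (auto simp: ASMs_def)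
  then show "x \<in> {0..nat (((int n - 1)^2) div 4)}" using io_bound[of n A] by auto
next
  fix k assume k: "k \<in> {0..nat (((int n - 1)^2) div 4)}"
  show "k \<in> io n ` ASMs n"
  proof (cases "n = 0")
    case True
    then have "k = 0" using k by simp
    moreover have "is_ASM 0 (\<lambda>i j. 0)" by (simp add: is_ASM_def)
    moreover have "io 0 (\<lambda>i j. 0) = 0" by (simp add: io_def)
    ultimately show ?thesis using True by (force simp: ASMs_def)
  next
    case False
    then have "1 \<le> n" by simp
    then obtain A where "is_ASM n A" "io n A = k"
      using construct[of n k] aB_eq[of n] k by auto
    then show ?thesis by (force simp: ASMs_def)
  qed
qed

theorem proposition4p6:
  fixes n :: nat
  shows "quot_dim TYPE('k::field_char_0) n = nat (((int n - 1)^2) div 4) + 1"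
  unfolding quot_dim_card io_image by simp

end
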